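(* Let $G$ be a group and let $S$ be a finite subset of $G$. Let $F$ be a subset of $G$ that is finite or cofinite (i.e. $G\setminus F$ is finite), such that $F\cap S^{-1}=\{1\}$. Then $|(FS)\setminus F|\ge|S|-1$.
   Context: $FS=\{xy : x\in F,\ y\in S\}$ and $S^{-1}=\{s^{-1}: s\in S\}$; $1$ is the identity of $G$. *)

theory Defs
  imports "HOL-Algebra.Coset"
begin

end

theory Submission
  imports Defs
begin

lemma nat_lex_aux: fixes x y b b' c :: nat
  assumes "x < y" "b' \<le> c" shows "x*(c+1)+b' < y*(c+1)+b"
proof -
  have "x*(c+1)+b' < (x+1)*(c+1)" using assms(2) by simp
  also have "... \<le> y*(c+1)" using assms(1) by (intro mult_right_mono) auto
  finally show ?thesis by simp
qed

context group begin

lemma mult_in_set_mult: "a \<in> A \<Longrightarrow> b \<in> B \<Longrightarrow> a \<otimes> b \<in> A <#> B"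
  unfolding set_mult_def by blast

lemma set_mult_elim: "x \<in> A <#> B \<Longrightarrow> (\<And>a b. a \<in> A \<Longrightarrow> b \<in> B \<Longrightarrow> x = a \<otimes> b \<Longrightarrow> P) \<Longrightarrow> P"
  unfolding set_mult_def by blast

lemma set_inv_iff: "x \<in> set_inv B \<longleftrightarrow> (\<exists>b\<in>B. x = inv b)"
  unfolding SET_INV_def by blast

lemma sub_mult_left: "\<one> \<in> B \<Longrightarrow> A \<subseteq> carrier G \<Longrightarrow> A \<subseteq> A <#> B"
  using mult_in_set_mult[of _ A \<one> B] by (metis r_one subsetD subsetI)

lemma sub_mult_right: "\<one> \<in> A \<Longrightarrow> B \<subseteq> carrier G \<Longrightarrow> B \<subseteq> A <#> B"
  using mult_in_set_mult[of \<one> A _ B] by (metis l_one subsetD subsetI)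

lemma kemp:
  assumes "finite C"
  shows "A \<subseteq> carrier G \<Longrightarrow> B \<subseteq> carrier G \<Longrightarrow> \<one> \<in> A \<Longrightarrow> \<one> \<in> B
     \<Longrightarrow> A \<inter> set_inv B = {\<one>} \<Longrightarrow> A <#> B \<subseteq> C
     \<Longrightarrow> card A + card B \<le> card (A <#> B) + 1"
proof (induction "(2 * card C - (card A + card B)) * (card C + 1) + card B" arbitrary: A B rule: less_induct)
  case less
  note Ac = less.prems(1) and Bc = less.prems(2) and A1 = less.prems(3) and B1 = less.prems(4)
    and AB = less.prems(5) and ABC = less.prems(6)
  have AsAB: "A \<subseteq> A <#> B" using sub_mult_left B1 Ac by blast
  have BsAB: "B \<subseteq> A <#> B" using sub_mult_right A1 Bc by blast
  have fAB: "finite (A <#> B)" using ABC assms finite_subset by blast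
  have fA: "finite A" using AsAB fAB finite_subset by blast
  have fB: "finite B" using BsAB fAB finite_subset by blast
  have cAB: "card (A <#> B) \<le> card C" using ABC assms card_mono by blast
  show ?case
  proof (cases "A \<inter> B = {\<one>}")
    case True
    have "card (A \<union> B) + 1 = card A + card B" using card_Un_Int[OF fA fB] True by simp
    moreover have "card (A \<union> B) \<le> card (A<#>B)" using AsAB BsAB fAB by (intro card_mono) auto
    ultimately show ?thesis by simp
  next
    case False
    then obtain g where gA: "g \<in> A" and gB: "g \<in> B" and g1: "g \<noteq> \<one>" using A1 B1 by blast
    have gc: "g \<in> carrier G" using gA Ac by blast
    have ginvB: "inv g \<notin> B"
    proof
      assume "inv g \<in> B"
      then have "g \<in> set_inv B" using set_inv_iff gc by (metis inv_inv)
      then show False using gA AB g1 by blast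
    qed
    have ginvA: "inv g \<notin> A"
    proof
      assume "inv g \<in> A"
      moreover have "inv g \<in> set_inv B" using set_inv_iff gB by blast
      ultimately have "inv g = \<one>" using AB by blast
      then show False using g1 gc by (metis inv_eq_1_iff)
    qed
    define Ag where "Ag = (\<lambda>x. x \<otimes> g) ` A"
    define gB where "gB = (\<lambda>x. g \<otimes> x) ` B"
    have injA: "inj_on (\<lambda>x. x \<otimes> g) A" using Ac gc by (intro inj_onI) (meson right_cancel subsetD)
    have injB: "inj_on (\<lambda>x. g \<otimes> x) B" using Bc gc by (intro inj_onI) (metis Units_eq Units_l_cancel subsetD)
    have cAg: "card Ag = card A" unfolding Ag_def using card_image[OF injA] .
    have cgB: "card gB = card B" unfolding gB_def using card_image[OF injB] .
    have fAg: "finite Ag" unfolding Ag_def using fA by simp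
    have fgB: "finite gB" unfolding gB_def using fB by simp
    define p where "p = card (A \<inter> Ag)"
    define q where "q = card (B \<inter> gB)"
    define A1 where "A1 = A \<union> Ag"
    define B1 where "B1 = {x \<in> B. g \<otimes> x \<in> B}"
    define A2 where "A2 = {x \<in> A. x \<otimes> g \<in> A}"
    define B2 where "B2 = B \<union> gB"
    have cA1: "card A1 + p = 2 * card A"
      unfolding A1_def p_def using card_Un_Int[OF fA fAg] cAg by simp
    have cB2: "card B2 + q = 2 * card B"
      unfolding B2_def q_def using card_Un_Int[OF fB fgB] cgB by simp
    have "(\<lambda>x. g \<otimes> x) ` B1 = B \<inter> gB" unfolding B1_def gB_def by auto
    moreover have "inj_on (\<lambda>x. g \<otimes> x) B1" using injB unfolding B1_def
      by (rule inj_on_subset) auto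
    ultimately have cB1: "card B1 = q" unfolding q_def by (metis card_image)
    have "(\<lambda>x. x \<otimes> g) ` A2 = A \<inter> Ag" unfolding A2_def Ag_def by auto
    moreover have "inj_on (\<lambda>x. x \<otimes> g) A2" using injA unfolding A2_def
      by (rule inj_on_subset) auto
    ultimately have cA2: "card A2 = p" unfolding p_def by (metis card_image)
    have A1c: "A1 \<subseteq> carrier G" unfolding A1_def Ag_def using Ac gc by auto
    have B1c: "B1 \<subseteq> carrier G" unfolding B1_def using Bc by auto
    have A11: "\<one> \<in> A1" unfolding A1_def using A1 by simp
    have B11: "\<one> \<in> B1" unfolding B1_def using B1 gB gc by simp
    have AB1: "A1 \<inter> set_inv B1 = {\<one>}"
    proof
      have "\<one> \<in> set_inv B1" using set_inv_iff[of \<one> B1] B11 inv_one by metis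
      then show "{\<one>} \<subseteq> A1 \<inter> set_inv B1" using A11 by blast
    next
      show "A1 \<inter> set_inv B1 \<subseteq> {\<one>}"
      proof
        fix x assume x: "x \<in> A1 \<inter> set_inv B1"
        then have "\<exists>b\<in>B1. x = inv b" using set_inv_iff by simp
        then obtain k where "k \<in> B1" "x = inv k" by blast
        then have k: "k \<in> B" "g \<otimes> k \<in> B" "x = inv k" unfolding B1_def by auto
        have kc: "k \<in> carrier G" using k Bc by blast
        show "x \<in> {\<one>}"
        proof (cases "x \<in> A")
          case True
          then have "x \<in> A \<inter> set_inv B" using k set_inv_iff by blast
          then show ?thesis using AB by blast
        next
          case False
          then obtain a where a: "a \<in> A" "x = a \<otimes> g" using x unfolding A1_def Ag_def by blast
          have ac: "a \<in> carrier G" using a Ac by blast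
          have "a = inv (g \<otimes> k)" using a k ac gc kc
            by (metis inv_mult_group m_assoc m_closed r_inv r_one inv_closed)
          then have "a \<in> A \<inter> set_inv B" using a k set_inv_iff by blast
          then have "a = \<one>" using AB by blast
          then have "inv k = g" using a k gc by simp
          then have "k = inv g" using kc gc by (metis inv_inv)
          then show ?thesis using k ginvB by blast
        qed
      qed
    qed
    have AB1s: "A1 <#> B1 \<subseteq> A <#> B"
    proof
      fix x assume "x \<in> A1 <#> B1"
      then obtain h k where hk: "h \<in> A1" "k \<in> B1" "x = h \<otimes> k" by (rule set_mult_elim)
      show "x \<in> A <#> B"
      proof (cases "h \<in> A")
        case True then show ?thesis using hk mult_in_set_mult unfolding B1_def by blast
      next
        case False
        then obtain a where a: "a \<in> A" "h = a \<otimes> g" using hk unfolding A1_def Ag_def by blast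
        have "a \<in> carrier G" "k \<in> carrier G" using a hk Ac B1c by auto
        then have "x = a \<otimes> (g \<otimes> k)" using a hk gc by (simp add: m_assoc)
        then show ?thesis using a hk mult_in_set_mult unfolding B1_def by blast
      qed
    qed
    have A2c: "A2 \<subseteq> carrier G" unfolding A2_def using Ac by auto
    have B2c: "B2 \<subseteq> carrier G" unfolding B2_def gB_def using Bc gc by auto
    have A21: "\<one> \<in> A2" unfolding A2_def using A1 gA gc by simp
    have B21: "\<one> \<in> B2" unfolding B2_def using B1 by simp
    have AB2: "A2 \<inter> set_inv B2 = {\<one>}"
    proof
      have "\<one> \<in> set_inv B2" using set_inv_iff[of \<one> B2] B21 inv_one by metis
      then show "{\<one>} \<subseteq> A2 \<inter> set_inv B2" using A21 by blast
    next
      show "A2 \<inter> set_inv B2 \<subseteq> {\<one>}"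
      proof
        fix x assume x: "x \<in> A2 \<inter> set_inv B2"
        then have "\<exists>b\<in>B2. x = inv b" using set_inv_iff by simp
        then obtain k where k: "k \<in> B2" "x = inv k" by blast
        have xA: "x \<in> A" "x \<otimes> g \<in> A" using x unfolding A2_def by auto
        show "x \<in> {\<one>}"
        proof (cases "k \<in> B")
          case True
          then have "x \<in> A \<inter> set_inv B" using k xA set_inv_iff by blast
          then show ?thesis using AB by blast
        next
          case False
          then obtain b where b: "b \<in> B" "k = g \<otimes> b" using k unfolding B2_def gB_def by blast
          have bc: "b \<in> carrier G" using b Bc by blast
          have "x \<otimes> g = inv b" using b k bc gc
            by (metis inv_mult_group m_assoc inv_closed l_inv r_one)
          then have "inv b \<in> A \<inter> set_inv B" using xA b set_inv_iff by auto
          then have "inv b = \<one>" using AB by blast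
          then have "b = \<one>" using bc by (metis inv_eq_1_iff)
          then have "x = inv g" using k b gc by simp
          then show ?thesis using xA ginvA by blast
        qed
      qed
    qed
    have AB2s: "A2 <#> B2 \<subseteq> A <#> B"
    proof
      fix x assume "x \<in> A2 <#> B2"
      then obtain h k where hk: "h \<in> A2" "k \<in> B2" "x = h \<otimes> k" by (rule set_mult_elim)
      show "x \<in> A <#> B"
      proof (cases "k \<in> B")
        case True then show ?thesis using hk mult_in_set_mult unfolding A2_def by blast
      next
        case False
        then obtain b where b: "b \<in> B" "k = g \<otimes> b" using hk unfolding B2_def gB_def by blast
        have "h \<in> carrier G" "b \<in> carrier G" using b hk A2c Bc by auto
        then have "x = (h \<otimes> g) \<otimes> b" using b hk gc by (simp add: m_assoc)
        then show ?thesis using b hk mult_in_set_mult unfolding A2_def by blast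
      qed
    qed
    have gen_card: "card X \<le> card C" if "X \<subseteq> A <#> B" for X
      using that ABC assms card_mono by (meson order_trans)
    have fin1: "finite (A1 <#> B1)" using AB1s fAB finite_subset by blast
    have fin2: "finite (A2 <#> B2)" using AB2s fAB finite_subset by blast
    have c12: "card (A1 <#> B1) \<le> card (A <#> B)" using AB1s fAB card_mono by blast
    have c22: "card (A2 <#> B2) \<le> card (A <#> B)" using AB2s fAB card_mono by blast
    have cA1C: "card A1 \<le> card C" using gen_card sub_mult_left[OF B11 A1c] AB1s by blast
    have cB1C: "card B1 \<le> card C" using gen_card sub_mult_right[OF A11 B1c] AB1s by blast
    have cA2C: "card A2 \<le> card C" using gen_card sub_mult_left[OF B21 A2c] AB2s by blast
    have cB2C: "card B2 \<le> card C" using gen_card sub_mult_right[OF A21 B2c] AB2s by blast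
    have cAC: "card A \<le> card C" using gen_card AsAB by blast
    have cBC: "card B \<le> card C" using gen_card BsAB by blast
    show ?thesis
    proof (cases "card B + p \<le> card A + q")
      case True
      have s1: "card A + card B \<le> card A1 + card B1" using True cA1 cB1 by linarith
      have B1B: "card B1 < card B"
      proof -
        have sub: "B1 \<subseteq> B" unfolding B1_def by auto
        have "B1 \<noteq> B"
        proof
          assume eq: "B1 = B"
          have "gB \<subseteq> B" using eq unfolding B1_def gB_def by auto
          then have "gB = B" using card_subset_eq[OF fB] cgB by blast
          then have "\<one> \<in> gB" using B1 by simp
          then obtain b where "b \<in> B" "\<one> = g \<otimes> b" unfolding gB_def by blast
          then have "b = inv g" using gc Bc by (metis inv_comm inv_equality subsetD)
          then show False using \<open>b \<in> B\<close> ginvB by simp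
        qed
        then show ?thesis using sub fB by (simp add: psubset_card_mono psubset_eq)
      qed
      have lt: "(2 * card C - (card A1 + card B1)) * (card C + 1) + card B1
          < (2 * card C - (card A + card B)) * (card C + 1) + card B"
      proof (cases "card A + card B = card A1 + card B1")
        case True then show ?thesis using B1B by simp
      next
        case False
        then have "2 * card C - (card A1 + card B1) < 2 * card C - (card A + card B)"
          using s1 cA1C cB1C by linarith
        then show ?thesis using nat_lex_aux cB1C by blast
      qed
      have "card A1 + card B1 \<le> card (A1 <#> B1) + 1"
        using less.hyps[OF lt A1c B1c A11 B11 AB1] AB1s ABC by blast
      then show ?thesis using s1 c12 by linarith
    next
      case False
      have s2: "card A + card B < card A2 + card B2" using False cA2 cB2 by linarith
      have lt: "(2 * card C - (card A2 + card B2)) * (card C + 1) + card B2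
          < (2 * card C - (card A + card B)) * (card C + 1) + card B"
      proof -
        have "2 * card C - (card A2 + card B2) < 2 * card C - (card A + card B)"
          using s2 cA2C cB2C by linarith
        then show ?thesis using nat_lex_aux cB2C by blast
      qed
      have "card A2 + card B2 \<le> card (A2 <#> B2) + 1"
        using less.hyps[OF lt A2c B2c A21 B21 AB2] AB2s ABC by blast
      then show ?thesis using s2 c22 by linarith
    qed
  qed
qed

end

theorem corollary5p3:
  fixes G (structure) and S F :: "'a set"
  assumes "group G"
    and "S \<subseteq> carrier G" and "finite S"
    and "F \<subseteq> carrier G"
    and "finite F \<or> finite (carrier G - F)"
    and "F \<inter> set_inv S = {\<one>}"
  shows "card ((F <#> S) - F) \<ge> card S - 1"
proof -
  interpret group G by fact
  have one_F: "\<one> \<in> F" and one_iS: "\<one> \<in> set_inv S" using assms(6) by auto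
  then obtain s0 where "s0 \<in> S" "\<one> = inv s0" using set_inv_iff by blast
  then have oneS: "\<one> \<in> S" using assms(2) by (metis inv_eq_1_iff subsetD)
  have subF: "F \<subseteq> F <#> S" using sub_mult_left[OF oneS assms(4)] .
  have FSc: "F <#> S \<subseteq> carrier G" using assms(2,4) by (auto elim!: set_mult_elim)
  show ?thesis
  proof (cases "finite F")
    case True
    have "F <#> S \<subseteq> (\<lambda>(a,b). a \<otimes> b) ` (F \<times> S)" by (auto elim!: set_mult_elim)
    then have fFS: "finite (F <#> S)" using True assms(3) finite_subset by blast
    have "card F + card S \<le> card (F <#> S) + 1"
      using kemp[OF fFS assms(4) assms(2) one_F oneS assms(6)] by blast
    moreover have "card ((F <#> S) - F) = card (F <#> S) - card F"
      using card_Diff_subset[OF True subF] .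
    moreover have "card F \<le> card (F <#> S)" using card_mono[OF fFS subF] .
    ultimately show ?thesis by linarith
  next
    case False
    define C0 where "C0 = carrier G - F"
    have fC: "finite C0" using False assms(5) unfolding C0_def by blast
    define D where "D = {c \<in> C0. \<forall>s\<in>S. c \<otimes> inv s \<in> C0}"
    have DC: "D \<subseteq> C0" unfolding D_def by auto
    have fD: "finite D" using DC fC finite_subset by blast
    have XC: "(F <#> S) - F \<subseteq> C0" using FSc unfolding C0_def by auto
    have fX: "finite ((F <#> S) - F)" using XC fC finite_subset by blast
    have CDX: "C0 - D \<subseteq> (F <#> S) - F"
    proof
      fix c assume c: "c \<in> C0 - D"
      then obtain s where s: "s \<in> S" "c \<otimes> inv s \<notin> C0" unfolding D_def by blast
      have cc: "c \<in> carrier G" "c \<notin> F" using c unfolding C0_def by auto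
      have sc: "s \<in> carrier G" using s assms(2) by blast
      have "c \<otimes> inv s \<in> F" using s cc sc unfolding C0_def by auto
      moreover have "c = (c \<otimes> inv s) \<otimes> s" using cc sc by (simp add: m_assoc)
      ultimately have "c \<in> F <#> S" using s mult_in_set_mult by metis
      then show "c \<in> (F <#> S) - F" using cc by blast
    qed
    have c1: "card C0 - card D \<le> card ((F <#> S) - F)"
      using card_mono[OF fX CDX] card_Diff_subset[OF fD DC] by simp
    define A where "A = insert \<one> D"
    define B where "B = set_inv S"
    have oneC: "\<one> \<notin> C0" using one_F unfolding C0_def by blast
    have oneD: "\<one> \<notin> D" using DC oneC by blast
    have cA: "card A = card D + 1" unfolding A_def using fD oneD by simp
    have Bimg: "B = (\<lambda>x. inv x) ` S" unfolding B_def using set_inv_iff by blast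
    have "inj_on (\<lambda>x. inv x) S" using assms(2) by (intro inj_onI) (metis inv_inv subsetD)
    then have cB: "card B = card S" unfolding Bimg by (simp add: card_image)
    have Ac: "A \<subseteq> carrier G" unfolding A_def using DC unfolding C0_def by auto
    have Bc: "B \<subseteq> carrier G" unfolding Bimg using assms(2) by auto
    have A1: "\<one> \<in> A" unfolding A_def by simp
    have B1: "\<one> \<in> B" unfolding B_def using one_iS .
    have iB: "set_inv B = S"
    proof
      show "set_inv B \<subseteq> S" unfolding Bimg using assms(2) set_inv_iff by (auto simp: subsetD)
      show "S \<subseteq> set_inv B"
      proof
        fix x assume "x \<in> S"
        then have "inv x \<in> B" "x = inv (inv x)" unfolding Bimg using assms(2) by auto
        then show "x \<in> set_inv B" using set_inv_iff by blast
      qed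
    qed
    have AB: "A \<inter> set_inv B = {\<one>}"
    proof -
      have "D \<inter> S = {}"
      proof (rule ccontr)
        assume "D \<inter> S \<noteq> {}"
        then obtain d where d: "d \<in> D" "d \<in> S" by blast
        then have "d \<otimes> inv d \<in> C0" unfolding D_def by blast
        moreover have "d \<otimes> inv d = \<one>" using d assms(2) by auto
        ultimately show False using oneC by simp
      qed
      then show ?thesis unfolding iB A_def using oneS by blast
    qed
    have ABC: "A <#> B \<subseteq> insert \<one> C0"
    proof
      fix x assume "x \<in> A <#> B"
      then obtain a b where ab: "a \<in> A" "b \<in> B" "x = a \<otimes> b" by (rule set_mult_elim)
      then obtain s where s: "s \<in> S" "b = inv s" unfolding Bimg by blast
      have sc: "s \<in> carrier G" using s assms(2) by blast
      show "x \<in> insert \<one> C0"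
      proof (cases "a = \<one>")
        case True
        then have x: "x = inv s" using ab s sc by simp
        show ?thesis
        proof (cases "s = \<one>")
          case True then show ?thesis using x by simp
        next
          case False
          have "inv s \<in> set_inv S" using s set_inv_iff by blast
          moreover have "inv s \<noteq> \<one>" using False sc by (metis inv_eq_1_iff)
          ultimately have "inv s \<notin> F" using assms(6) by blast
          then show ?thesis using x sc unfolding C0_def by auto
        qed
      next
        case False
        then have "a \<in> D" using ab unfolding A_def by blast
        then show ?thesis using ab s unfolding D_def by blast
      qed
    qed
    have fC1: "finite (insert \<one> C0)" using fC by simp
    have "card A + card B \<le> card (A <#> B) + 1"
      using kemp[OF fC1 Ac Bc A1 B1 AB ABC] .
    moreover have "card (A <#> B) \<le> card (insert \<one> C0)" using card_mono[OF fC1 ABC] .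
    moreover have "card (insert \<one> C0) = card C0 + 1" using fC oneC by simp
    moreover have "card D \<le> card C0" using card_mono[OF fC DC] .
    ultimately have "card S - 1 \<le> card C0 - card D" using cA cB by linarith
    then show ?thesis using c1 by linarith
  qed
qed

end
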